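(* Let $x\in S_n$ avoid $123$. Then $x$ avoids the bivincular pattern $132^{\star}$ if and only if $|C_{i,j}|\le 1$ for all cells $C_{i,j}$ of the grid decomposition of $x$.
   Context: An occurrence of $132^{\star}$ in $x$ is a pair of indices $a<b<n$ with $x_a<x_{b+1}$ and $x_b=x_{b+1}+1$. Let $m_1,\dots,m_k$ be the left-to-right minima of $x$ (entries smaller than every entry to their left), in order, and write $x=m_1B_1m_2B_2\cdots m_kB_k$, where $B_j$ is the (possibly empty) set of entries strictly between $m_j$ and $m_{j+1}$ in position ($B_k$: the entries after $m_k$). Set $m_0=+\infty$ and $H_i=\{y\in[n]: m_i<y<m_{i-1}\}$ for $1\le i\le k$. The cell $C_{i,j}$ is $H_i\cap B_j$, the set of entries of $B_j$ whose values lie in $H_i$. *)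

theory Defs
  imports Main
begin

(* A permutation x of [n] is a list of length n with distinct entries {1..n}.
   Positions are 1-based: ent xs i = x_i. *)
definition perm_of :: "nat \<Rightarrow> nat list \<Rightarrow> bool" where
  "perm_of n xs \<longleftrightarrow> length xs = n \<and> distinct xs \<and> set xs = {1..n}"

definition ent :: "nat list \<Rightarrow> nat \<Rightarrow> nat" where
  "ent xs i = xs ! (i - 1)"

definition avoids123 :: "nat list \<Rightarrow> bool" where
  "avoids123 xs \<longleftrightarrow> \<not> (\<exists>i j k. 1 \<le> i \<and> i < j \<and> j < k \<and> k \<le> length xs \<and>
                            ent xs i < ent xs j \<and> ent xs j < ent xs k)"

definition occ132star :: "nat list \<Rightarrow> nat \<Rightarrow> nat \<Rightarrow> bool" where
  "occ132star xs a b \<longleftrightarrow> 1 \<le> a \<and> a < b \<and> b < length xs \<and>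
      ent xs a < ent xs (b + 1) \<and> ent xs b = ent xs (b + 1) + 1"

definition avoids132star :: "nat list \<Rightarrow> bool" where
  "avoids132star xs \<longleftrightarrow> \<not> (\<exists>a b. occ132star xs a b)"

definition lrmin_positions :: "nat list \<Rightarrow> nat set" where
  "lrmin_positions xs = {p. 1 \<le> p \<and> p \<le> length xs \<and>
      (\<forall>q. 1 \<le> q \<and> q < p \<longrightarrow> ent xs p < ent xs q)}"

definition num_lrmin :: "nat list \<Rightarrow> nat" where
  "num_lrmin xs = card (lrmin_positions xs)"

definition lrmin_pos :: "nat list \<Rightarrow> nat \<Rightarrow> nat" where
  "lrmin_pos xs j = sorted_list_of_set (lrmin_positions xs) ! (j - 1)"

definition lrmin_val :: "nat list \<Rightarrow> nat \<Rightarrow> nat" where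
  "lrmin_val xs j = ent xs (lrmin_pos xs j)"

definition block :: "nat list \<Rightarrow> nat \<Rightarrow> nat set" where
  "block xs j = {ent xs q | q. lrmin_pos xs j < q \<and>
      (if j < num_lrmin xs then q < lrmin_pos xs (j + 1) else q \<le> length xs)}"

(* H_i = {y in [n] : m_i < y < m_{i-1}}, with m_0 = +infinity *)
definition hband :: "nat list \<Rightarrow> nat \<Rightarrow> nat set" where
  "hband xs i = {y. 1 \<le> y \<and> y \<le> length xs \<and> lrmin_val xs i < y \<and>
      (i = 1 \<or> y < lrmin_val xs (i - 1))}"

definition cell :: "nat list \<Rightarrow> nat \<Rightarrow> nat \<Rightarrow> nat set" where
  "cell xs i j = hband xs i \<inter> block xs j"

end

theory Submission imports Defs begin

lemma P_fin: "finite (lrmin_positions xs)"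
  by (rule finite_subset[of _ "{1..length xs}"]) (auto simp: lrmin_positions_def)

lemma L_props:
  shows "set (sorted_list_of_set (lrmin_positions xs)) = lrmin_positions xs"
    "length (sorted_list_of_set (lrmin_positions xs)) = num_lrmin xs"
    "sorted_wrt (<) (sorted_list_of_set (lrmin_positions xs))"
  using P_fin[of xs] by (auto simp: num_lrmin_def)

lemma pos_mono:
  assumes "1 \<le> s" "s < t" "t \<le> num_lrmin xs"
  shows "lrmin_pos xs s < lrmin_pos xs t"
proof -
  note L = L_props[of xs]
  show ?thesis unfolding lrmin_pos_def
    using sorted_wrt_nth_less[OF L(3), of "s-1" "t-1"] L(2) assms by auto
qed

lemma pos_mono_le:
  assumes "1 \<le> s" "s \<le> t" "t \<le> num_lrmin xs"
  shows "lrmin_pos xs s \<le> lrmin_pos xs t"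
  using pos_mono[of s t xs] assms by (cases "s = t") auto

lemma pos_in:
  assumes "1 \<le> t" "t \<le> num_lrmin xs"
  shows "lrmin_pos xs t \<in> lrmin_positions xs"
proof -
  note L = L_props[of xs]
  show ?thesis unfolding lrmin_pos_def
    using nth_mem[of "t-1" "sorted_list_of_set (lrmin_positions xs)"] L(1,2) assms by auto
qed

lemma in_P:
  assumes "p \<in> lrmin_positions xs"
  shows "\<exists>t. 1 \<le> t \<and> t \<le> num_lrmin xs \<and> p = lrmin_pos xs t"
proof -
  note L = L_props[of xs]
  from assms L(1) obtain i where "i < length (sorted_list_of_set (lrmin_positions xs))"
    "p = sorted_list_of_set (lrmin_positions xs) ! i"
    by (metis in_set_conv_nth)
  then show ?thesis using L(2) unfolding lrmin_pos_def
    by (intro exI[of _ "Suc i"]) auto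
qed

lemma P_dec:
  assumes "p \<in> lrmin_positions xs" "p' \<in> lrmin_positions xs" "p < p'"
  shows "ent xs p' < ent xs p"
  using assms by (auto simp: lrmin_positions_def)

lemma P_range: "p \<in> lrmin_positions xs \<Longrightarrow> 1 \<le> p \<and> p \<le> length xs"
  by (auto simp: lrmin_positions_def)

lemma val_dec:
  assumes "1 \<le> s" "s < t" "t \<le> num_lrmin xs"
  shows "lrmin_val xs t < lrmin_val xs s"
  unfolding lrmin_val_def using P_dec pos_mono pos_in assms
  by (metis le_trans less_imp_le order.strict_trans1)

lemma val_dec_le:
  assumes "1 \<le> s" "s \<le> t" "t \<le> num_lrmin xs"
  shows "lrmin_val xs t \<le> lrmin_val xs s"
  using val_dec[of s t xs] assms by (cases "s = t") auto

lemma notin_between: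
  assumes "1 \<le> t" "t \<le> num_lrmin xs" "lrmin_pos xs t < p"
    "t < num_lrmin xs \<Longrightarrow> p < lrmin_pos xs (t+1)"
  shows "p \<notin> lrmin_positions xs"
proof
  assume "p \<in> lrmin_positions xs"
  then obtain s where s: "1 \<le> s" "s \<le> num_lrmin xs" "p = lrmin_pos xs s" using in_P by blast
  show False
  proof (cases "s \<le> t")
    case True then show ?thesis using pos_mono_le[of s t xs] s assms by auto
  next
    case False
    then have "t < num_lrmin xs" using s by auto
    then show ?thesis using pos_mono_le[of "t+1" s xs] s assms False by auto
  qed
qed

lemma ent_inj:
  assumes "perm_of n xs" "1 \<le> p" "p \<le> length xs" "1 \<le> q" "q \<le> length xs" "ent xs p = ent xs q"
  shows "p = q"
  using assms nth_eq_iff_index_eq[of xs "p-1" "q-1"] by (auto simp: perm_of_def ent_def) linarith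

lemma ent_range:
  assumes "perm_of n xs" "1 \<le> p" "p \<le> length xs"
  shows "1 \<le> ent xs p \<and> ent xs p \<le> n"
proof -
  have "xs ! (p-1) \<in> set xs" using assms by auto
  then show ?thesis using assms by (auto simp: perm_of_def ent_def)
qed

lemma ent_surj:
  assumes "perm_of n xs" "1 \<le> v" "v \<le> n"
  shows "\<exists>q. 1 \<le> q \<and> q \<le> length xs \<and> ent xs q = v"
proof -
  have "v \<in> set xs" using assms by (auto simp: perm_of_def)
  then obtain i where "i < length xs" "xs ! i = v" by (metis in_set_conv_nth)
  then show ?thesis by (intro exI[of _ "Suc i"]) (auto simp: ent_def)
qed

lemma nonP_witness:
  assumes "perm_of n xs" "1 \<le> p" "p \<le> length xs" "p \<notin> lrmin_positions xs"
  shows "\<exists>r. 1 \<le> r \<and> r < p \<and> ent xs r < ent xs p"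
proof -
  from assms obtain r where r: "1 \<le> r" "r < p" "\<not> ent xs p < ent xs r"
    by (auto simp: lrmin_positions_def)
  then have "ent xs r \<noteq> ent xs p" using ent_inj[OF assms(1), of r p] assms by auto
  then show ?thesis using r by (intro exI[of _ r]) auto
qed

lemma nonP_dec:
  assumes "perm_of n xs" "avoids123 xs" "1 \<le> p" "p < q" "q \<le> length xs"
    "p \<notin> lrmin_positions xs"
  shows "ent xs q < ent xs p"
proof -
  obtain r where r: "1 \<le> r" "r < p" "ent xs r < ent xs p" using nonP_witness assms by fastforce
  have "ent xs q \<noteq> ent xs p" using ent_inj[OF assms(1), of p q] assms by auto
  moreover have "\<not> ent xs p < ent xs q" using assms(2) r assms unfolding avoids123_def by blast
  ultimately show ?thesis by auto
qed

lemma min_reach: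
  assumes "perm_of n xs" "1 \<le> q" "q \<le> length xs"
  shows "\<exists>p\<in>lrmin_positions xs. p \<le> q \<and> ent xs p \<le> ent xs q"
  using assms(2,3)
proof (induction q rule: less_induct)
  case (less q)
  show ?case
  proof (cases "q \<in> lrmin_positions xs")
    case True then show ?thesis by auto
  next
    case False
    then obtain r where "1 \<le> r" "r < q" "ent xs r < ent xs q" using nonP_witness assms less by blast
    moreover have "r \<le> length xs" using calculation less.prems by auto
    ultimately obtain p where "p\<in>lrmin_positions xs" "p \<le> r" "ent xs p \<le> ent xs r"
      using less.IH[of r] by blast
    then show ?thesis using \<open>r < q\<close> \<open>ent xs r < ent xs q\<close> by (intro bexI[of _ p]) auto
  qed
qed

lemma last_min:
  assumes "perm_of n xs" "1 \<le> q" "q \<le> length xs"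
  shows "lrmin_val xs (num_lrmin xs) \<le> ent xs q"
proof -
  obtain p where p: "p \<in> lrmin_positions xs" "p \<le> q" "ent xs p \<le> ent xs q"
    using min_reach assms by blast
  obtain t where t: "1 \<le> t" "t \<le> num_lrmin xs" "p = lrmin_pos xs t" using in_P p by blast
  have "lrmin_val xs (num_lrmin xs) \<le> lrmin_val xs t" using val_dec_le t by auto
  then show ?thesis using p t by (simp add: lrmin_val_def)
qed

lemma occ_cell:
  assumes perm: "perm_of n xs" and occ: "occ132star xs a b"
  shows "\<exists>i j. 1 \<le> i \<and> i \<le> num_lrmin xs \<and> 1 \<le> j \<and> j \<le> num_lrmin xs \<and>
           2 \<le> card (cell xs i j)"
proof -
  define k where "k = num_lrmin xs"
  define v where "v = ent xs (b+1)"
  have o: "1 \<le> a" "a < b" "b < length xs" "ent xs a < v" "ent xs b = v + 1"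
    using occ by (auto simp: occ132star_def v_def)
  have nP1: "b+1 \<notin> lrmin_positions xs" using o by (auto simp: lrmin_positions_def v_def)
  have nP0: "b \<notin> lrmin_positions xs" using o by (auto simp: lrmin_positions_def)
  have oneP: "1 \<in> lrmin_positions xs" using o by (auto simp: lrmin_positions_def)
  have k1: "1 \<le> k" unfolding k_def num_lrmin_def using oneP P_fin[of xs]
    by (metis One_nat_def Suc_leI card_gt_0_iff empty_iff)
  obtain t0 where t0: "1 \<le> t0" "t0 \<le> k" "1 = lrmin_pos xs t0" using in_P[OF oneP] k_def by auto
  have pos1: "lrmin_pos xs 1 \<le> 1" using pos_mono_le[of 1 t0 xs] t0 k_def by auto
  define S where "S = {t. 1 \<le> t \<and> t \<le> k \<and> lrmin_pos xs t < b}"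
  have finS: "finite S" unfolding S_def by auto
  have "1 \<in> S" unfolding S_def using pos1 k1 o by auto
  define j where "j = Max S"
  have jS: "j \<in> S" unfolding j_def using finS \<open>1 \<in> S\<close> Max_in by blast
  have jmax: "\<And>t. t \<in> S \<Longrightarrow> t \<le> j" unfolding j_def using finS by auto
  have j1: "1 \<le> j" "j \<le> k" "lrmin_pos xs j < b" using jS S_def by auto
  have jnext: "b + 1 < lrmin_pos xs (j+1)" if "j < k"
  proof -
    have "j + 1 \<notin> S" using jmax by fastforce
    then have "b \<le> lrmin_pos xs (j+1)" using that j1 unfolding S_def by auto
    moreover have "lrmin_pos xs (j+1) \<in> lrmin_positions xs" using pos_in[of "j+1" xs] that k_def by auto
    ultimately have "lrmin_pos xs (j+1) \<noteq> b" "lrmin_pos xs (j+1) \<noteq> b+1"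
      using nP0 nP1 by auto
    then show ?thesis using \<open>b \<le> lrmin_pos xs (j+1)\<close> by linarith
  qed
  have blk1: "v \<in> block xs j"
    unfolding block_def using j1 jnext o k_def
    by (auto simp: v_def intro!: exI[of _ "b+1"])
  have blk2: "v + 1 \<in> block xs j"
    unfolding block_def using j1 jnext o k_def
    by (auto intro!: exI[of _ b])
  note blk = blk1 blk2
  have vrange: "1 \<le> v \<and> v \<le> length xs" "1 \<le> v + 1 \<and> v + 1 \<le> length xs"
    using ent_range[OF perm, of "b+1"] ent_range[OF perm, of b] o perm
    by (auto simp: v_def perm_of_def)
  define T where "T = {t. 1 \<le> t \<and> t \<le> k \<and> lrmin_val xs t < v}"
  have kT: "k \<in> T"
  proof -
    have "lrmin_val xs k \<le> v" using last_min[OF perm, of "b+1"] o k_def v_def by auto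
    moreover have "lrmin_val xs k \<noteq> v"
    proof
      assume "lrmin_val xs k = v"
      moreover have "lrmin_pos xs k \<in> lrmin_positions xs" using pos_in k1 k_def by auto
      ultimately show False using ent_inj[OF perm, of "lrmin_pos xs k" "b+1"] P_range o nP1
        unfolding lrmin_val_def v_def by fastforce
    qed
    ultimately show ?thesis unfolding T_def using k1 by auto
  qed
  define i where "i = (LEAST t. t \<in> T)"
  have iT: "i \<in> T" unfolding i_def using kT by (rule LeastI)
  have imin: "\<And>t. t \<in> T \<Longrightarrow> i \<le> t" unfolding i_def by (rule Least_le)
  have i1: "1 \<le> i" "i \<le> k" "lrmin_val xs i < v" using iT T_def by auto
  have iprev: "v + 1 < lrmin_val xs (i - 1)" if "i \<noteq> 1"
  proof -
    have "i - 1 \<notin> T" using imin that i1 by fastforce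
    then have ge: "v \<le> lrmin_val xs (i-1)" using that i1 unfolding T_def by auto
    have inP: "lrmin_pos xs (i-1) \<in> lrmin_positions xs" using pos_in[of "i-1" xs] that i1 k_def by auto
    have "lrmin_val xs (i-1) \<noteq> v"
      using ent_inj[OF perm, of "lrmin_pos xs (i-1)" "b+1"] P_range[OF inP] o nP1 inP
      unfolding lrmin_val_def v_def by fastforce
    moreover have "lrmin_val xs (i-1) \<noteq> v + 1"
      using ent_inj[OF perm, of "lrmin_pos xs (i-1)" "b"] P_range[OF inP] o nP0 inP
      unfolding lrmin_val_def by fastforce
    ultimately show ?thesis using ge by auto
  qed
  have hb: "v \<in> hband xs i" "v + 1 \<in> hband xs i"
    unfolding hband_def using vrange i1 iprev by (cases "i = 1"; simp; fastforce)+
  have fin: "finite (cell xs i j)"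
    by (rule finite_subset[of _ "{1..length xs}"]) (auto simp: cell_def hband_def)
  have "{v, v+1} \<subseteq> cell xs i j" using hb blk by (auto simp: cell_def)
  then have "card {v, v+1} \<le> card (cell xs i j)" using fin by (rule card_mono[rotated])
  then have "2 \<le> card (cell xs i j)" by simp
  then show ?thesis using i1 j1 k_def by blast
qed

lemma card2_obtain:
  assumes "2 \<le> card A"
  obtains y z where "y \<in> A" "z \<in> A" "z < (y::nat)"
proof -
  have "finite A" using assms by (metis card.infinite not_numeral_le_zero)
  obtain u w where "u \<in> A" "w \<in> A" "u \<noteq> w"
  proof (rule ccontr)
    assume "\<not> thesis"
    then have "\<forall>u\<in>A. \<forall>w\<in>A. u = w" using that by blast
    then have "card A \<le> 1" using card_le_Suc0_iff_eq[OF \<open>finite A\<close>] by auto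
    then show False using assms by auto
  qed
  then show ?thesis using that by (cases "u < w") auto
qed

lemma block_pos:
  assumes "y \<in> block xs j" "1 \<le> j" "j \<le> num_lrmin xs"
  shows "\<exists>p. ent xs p = y \<and> lrmin_pos xs j < p \<and> p \<le> length xs \<and>
     (j < num_lrmin xs \<longrightarrow> p < lrmin_pos xs (j+1))"
proof -
  obtain p where p: "y = ent xs p" "lrmin_pos xs j < p"
    "if j < num_lrmin xs then p < lrmin_pos xs (j + 1) else p \<le> length xs"
    using assms(1) unfolding block_def by blast
  have "p \<le> length xs"
  proof (cases "j < num_lrmin xs")
    case True
    then have "lrmin_pos xs (j+1) \<in> lrmin_positions xs" using pos_in[of "j+1" xs] by auto
    then show ?thesis using P_range p True by fastforce
  next
    case False then show ?thesis using p by auto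
  qed
  then show ?thesis using p by (intro exI[of _ p]) (auto split: if_splits)
qed

lemma cell_occ:
  assumes perm: "perm_of n xs" and av: "avoids123 xs"
    and ij: "1 \<le> i" "i \<le> num_lrmin xs" "1 \<le> j" "j \<le> num_lrmin xs"
    and c2: "2 \<le> card (cell xs i j)"
  shows "\<exists>a b. occ132star xs a b"
proof -
  define k where "k = num_lrmin xs"
  have nlen: "n = length xs" using perm by (auto simp: perm_of_def)
  obtain y z where yz: "y \<in> cell xs i j" "z \<in> cell xs i j" "z < y" using c2 card2_obtain by blast
  obtain p where p: "ent xs p = y" "lrmin_pos xs j < p" "p \<le> length xs"
     "j < k \<Longrightarrow> p < lrmin_pos xs (j+1)"
    using block_pos[of y xs j] yz ij k_def by (auto simp: cell_def)
  obtain q where q: "ent xs q = z" "lrmin_pos xs j < q" "q \<le> length xs"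
     "j < k \<Longrightarrow> q < lrmin_pos xs (j+1)"
    using block_pos[of z xs j] yz ij k_def by (auto simp: cell_def)
  have mid: "r \<notin> lrmin_positions xs" if "lrmin_pos xs j < r" "j < k \<Longrightarrow> r < lrmin_pos xs (j+1)" for r
    using notin_between[of j xs r] that ij k_def by auto
  have p1: "1 \<le> p" using p by auto
  have pP: "p \<notin> lrmin_positions xs" "q \<notin> lrmin_positions xs" using mid p q by auto
  have pq: "p < q"
  proof (rule ccontr)
    assume "\<not> p < q"
    moreover have "p \<noteq> q" using p q yz by auto
    ultimately have "q < p" by auto
    then have "ent xs p < ent xs q" using nonP_dec[OF perm av, of q p] pP p q by auto
    then show False using p q yz by auto
  qed
  have p1P: "p + 1 \<notin> lrmin_positions xs"
  proof (cases "p + 1 = q")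
    case True then show ?thesis using pP by auto
  next
    case False
    have "j < k \<Longrightarrow> p + 1 < lrmin_pos xs (j+1)" using q(4) pq False by linarith
    then show ?thesis using mid[of "p+1"] p(2) by auto
  qed
  have hb: "lrmin_val xs i < z" "i \<noteq> 1 \<Longrightarrow> y < lrmin_val xs (i-1)"
    using yz by (auto simp: cell_def hband_def)
  have e1: "ent xs (p+1) < y" using nonP_dec[OF perm av, of p "p+1"] pP p pq q(3) by auto
  have e2: "z \<le> ent xs (p+1)"
  proof (cases "p + 1 = q")
    case True then show ?thesis using q by auto
  next
    case False then show ?thesis using nonP_dec[OF perm av, of "p+1" q] p1P q pq by auto
  qed
  have e3: "ent xs (p+1) = y - 1"
  proof (rule ccontr)
    assume "ent xs (p+1) \<noteq> y - 1"
    then have lt: "ent xs (p+1) < y - 1" using e1 by auto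
    define w where "w = y - 1"
    have "1 \<le> w" "w \<le> n" using lt ent_range[OF perm, of p] p1 p by (auto simp: w_def)
    then obtain r where r: "1 \<le> r" "r \<le> length xs" "ent xs r = w" using ent_surj[OF perm] by blast
    have rP: "r \<notin> lrmin_positions xs"
    proof
      assume "r \<in> lrmin_positions xs"
      then obtain t where t: "1 \<le> t" "t \<le> k" "r = lrmin_pos xs t" using in_P k_def by blast
      then have wt: "w = lrmin_val xs t" using r by (simp add: lrmin_val_def)
      show False
      proof (cases "i \<le> t")
        case True
        then have "lrmin_val xs t \<le> lrmin_val xs i" using val_dec_le[of i t xs] ij t k_def by auto
        then show False using wt hb e2 lt w_def by auto
      next
        case False
        then have "lrmin_val xs (i-1) \<le> lrmin_val xs t" using val_dec_le[of t "i-1" xs] ij t k_def by auto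
        moreover have "i \<noteq> 1" using False t(1) by auto
        ultimately show False using wt hb w_def by fastforce
      qed
    qed
    consider "r < p" | "r = p" | "r = p + 1" | "p + 1 < r" by linarith
    then show False
    proof cases
      case 1
      then have "ent xs p < ent xs r" using nonP_dec[OF perm av, of r p] rP r p by auto
      then show ?thesis using r p w_def yz by auto
    next
      case 2 then show ?thesis using r p w_def yz by auto
    next
      case 3 then show ?thesis using r lt w_def by auto
    next
      case 4
      then have "ent xs r < ent xs (p+1)" using nonP_dec[OF perm av, of "p+1" r] p1P r by auto
      then show ?thesis using r lt w_def by auto
    qed
  qed
  obtain a where a: "1 \<le> a" "a < p + 1" "ent xs a < ent xs (p+1)"
    using nonP_witness[OF perm, of "p+1"] p1P p pq q by auto
  have "a \<noteq> p" using a e1 p by auto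
  then have "occ132star xs a p" unfolding occ132star_def using a e3 p q pq yz by auto
  then show ?thesis by blast
qed

theorem proposition3p21:
  fixes n :: nat and xs :: "nat list"
  assumes "perm_of n xs" and "avoids123 xs"
  shows "avoids132star xs \<longleftrightarrow>
    (\<forall>i j. 1 \<le> i \<and> i \<le> num_lrmin xs \<and> 1 \<le> j \<and> j \<le> num_lrmin xs \<longrightarrow>
       card (cell xs i j) \<le> 1)"
proof
  assume av: "avoids132star xs"
  show "\<forall>i j. 1 \<le> i \<and> i \<le> num_lrmin xs \<and> 1 \<le> j \<and> j \<le> num_lrmin xs \<longrightarrow>
       card (cell xs i j) \<le> 1"
  proof (intro allI impI)
    fix i j assume "1 \<le> i \<and> i \<le> num_lrmin xs \<and> 1 \<le> j \<and> j \<le> num_lrmin xs"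
    then show "card (cell xs i j) \<le> 1"
      using cell_occ[OF assms, of i j] av unfolding avoids132star_def by force
  qed
next
  assume c: "\<forall>i j. 1 \<le> i \<and> i \<le> num_lrmin xs \<and> 1 \<le> j \<and> j \<le> num_lrmin xs \<longrightarrow>
       card (cell xs i j) \<le> 1"
  show "avoids132star xs"
    unfolding avoids132star_def
  proof
    assume "\<exists>a b. occ132star xs a b"
    then obtain a b where "occ132star xs a b" by blast
    from occ_cell[OF assms(1) this] c show False by fastforce
  qed
qed

end
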